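(* There exists a last-use opaque history that does not avoid cascading aborts; namely, some last-use opaque history contains transactions $T_i\neq T_j$ such that $T_j$ reads from $T_i$ via a read that occurs before $T_i$ commits.
   Context: Standard TM model: transactions with operations $\mathit{init}_i$, $\mathit{read}_i(x)$, $\mathit{write}_i(x,v)$, $\mathit{tryC}_i$, $\mathit{tryA}_i$; well-formed histories with unique writes; variables with domain $\mathbb{N}_0$, initial value $0$. $T_j$ reads from $T_i$ if $H|T_i$ contains $w_i(x,v)\to ok_i$ and $H|T_j$ contains $r_j(x)\to v$ for some $x,v$. A history avoids cascading aborts (ACA) iff for all $T_i\neq T_j$ such that $T_j$ reads from $T_i$, $T_i$ commits before that read. Committed/aborted/live, completion, equivalence, real-time order $\prec_H$, sequential histories as usual. Sequential $S'$ legal iff for each $x$, every read in $S'|x$ returning a value returns the latest preceding written value (or $0$). $\mathrm{vis}(S,T_i)$: subhistory of $S$ of $S|T_j$ for $j=i$ or $T_j$ committed with $T_j\prec_S T_i$; $T_i$ legal iff $\mathrm{vis}$ legal. Last-use opacity (relative to the program producing $H$): $T_j$ is decided on $x$ if $H|T_j$ contains a complete write on $x$ (response $\ne A_j$) after which no producible extension of $H$ has another write invocation by $T_j$ on $x$; $S\Downarrow_C T_j$: $T_j$'s $\mathit{init}_j$ and operations on its decided variables followed by $\mathit{tryC}_j\to C_j$. A last-use view of $T_i$ in sequential $S$ contains $S|T_j$ if $j=i$ or $T_j$ committed with $T_j\prec_S T_i$; if $T_j$ not committed, decided on some variable, $T_j\prec_S T_i$ and not $T_j\prec_H T_i$, contains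 either $S\Downarrow_C T_j$ or nothing; otherwise nothing. $T_i$ last-use legal iff some last-use view legal. Finite $H$ final-state last-use opaque iff some sequential $S$ equivalent to a completion of $H$ preserves $\prec_H$, committed transactions legal and others last-use legal; $H$ last-use opaque iff every finite prefix is final-state last-use opaque. *)

theory Defs
  imports Main "HOL-Library.Sublist"
begin

type_synonym tid = nat
type_synonym var = nat
type_synonym val = nat

datatype inv = Init | Rd var | Wr var val | TryC | TryA
datatype resp = InitOk | RVal val | WOk | Com | Ab
datatype event = Inv tid inv | Res tid resp

type_synonym history = "event list"

fun tid_of :: "event \<Rightarrow> tid" where
  "tid_of (Inv t _) = t"
| "tid_of (Res t _) = t"

definition sub :: "history \<Rightarrow> tid \<Rightarrow> history" where
  "sub H t = filter (\<lambda>e. tid_of e = t) H"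

fun matches :: "inv \<Rightarrow> resp \<Rightarrow> bool" where
  "matches Init r = (r = InitOk \<or> r = Ab)"
| "matches (Rd x) r = ((\<exists>v. r = RVal v) \<or> r = Ab)"
| "matches (Wr x v) r = (r = WOk \<or> r = Ab)"
| "matches TryC r = (r = Com \<or> r = Ab)"
| "matches TryA r = (r = Ab)"

fun terminal :: "resp \<Rightarrow> bool" where
  "terminal r = (r = Com \<or> r = Ab)"

text \<open>Well-formedness of a single transaction subhistory; the flag says whether
  init has already happened.\<close>
fun wf_seq :: "bool \<Rightarrow> history \<Rightarrow> bool" where
  "wf_seq b [] = True"
| "wf_seq b [Inv t i] = (b \<noteq> (i = Init))"
| "wf_seq b (Inv t i # Res t' r # rest) =
     (t = t' \<and> b \<noteq> (i = Init) \<and> matches i r \<and>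
      (if terminal r then rest = [] else wf_seq True rest))"
| "wf_seq b _ = False"

definition unique_writes :: "history \<Rightarrow> bool" where
  "unique_writes H = (\<forall>k k' t t' x v. k < k' \<longrightarrow> k' < length H \<longrightarrow>
      H ! k = Inv t (Wr x v) \<longrightarrow> H ! k' \<noteq> Inv t' (Wr x v))"

definition wf :: "history \<Rightarrow> bool" where
  "wf H = ((\<forall>t. wf_seq False (sub H t)) \<and> unique_writes H)"

definition cop :: "history \<Rightarrow> tid \<Rightarrow> nat \<Rightarrow> nat \<Rightarrow> inv \<Rightarrow> resp \<Rightarrow> bool" where
  "cop H t k k' i r = (k < k' \<and> k' < length H \<and> H ! k = Inv t i \<and> H ! k' = Res t r \<and>
      (\<forall>m. k < m \<longrightarrow> m < k' \<longrightarrow> tid_of (H ! m) \<noteq> t))"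

definition intx :: "tid \<Rightarrow> history \<Rightarrow> bool" where
  "intx t H = (\<exists>e\<in>set H. tid_of e = t)"

definition committed :: "tid \<Rightarrow> history \<Rightarrow> bool" where
  "committed t H = (Res t Com \<in> set H)"

definition aborted :: "tid \<Rightarrow> history \<Rightarrow> bool" where
  "aborted t H = (Res t Ab \<in> set H)"

definition live :: "tid \<Rightarrow> history \<Rightarrow> bool" where
  "live t H = (intx t H \<and> \<not> committed t H \<and> \<not> aborted t H)"

definition compl_ext :: "history \<Rightarrow> tid \<Rightarrow> history \<Rightarrow> bool" where
  "compl_ext H t xs =
     (if live t H then
        (case last (sub H t) of
           Inv _ TryC \<Rightarrow> xs = [Res t Com] \<or> xs = [Res t Ab]
         | Inv _ _ \<Rightarrow> xs = [Res t Ab]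
         | Res _ _ \<Rightarrow> xs = [Inv t TryA, Res t Ab])
      else xs = [])"

definition completion :: "history \<Rightarrow> history \<Rightarrow> bool" where
  "completion H Hc = (\<exists>ext. Hc = H @ ext \<and> (\<forall>t. compl_ext H t (sub ext t)))"

definition equiv_hist :: "history \<Rightarrow> history \<Rightarrow> bool" where
  "equiv_hist S H = (\<forall>t. sub S t = sub H t)"

definition prec :: "history \<Rightarrow> tid \<Rightarrow> tid \<Rightarrow> bool" where
  "prec H i j = ((committed i H \<or> aborted i H) \<and> intx j H \<and>
      (\<forall>a b. a < length H \<longrightarrow> b < length H \<longrightarrow> tid_of (H ! a) = i \<longrightarrow>
              tid_of (H ! b) = j \<longrightarrow> a < b))"

definition sequential :: "history \<Rightarrow> bool" where
  "sequential S = (\<forall>a b c. a < b \<longrightarrow> b < c \<longrightarrow> c < length S \<longrightarrow>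
      tid_of (S ! a) = tid_of (S ! c) \<longrightarrow> tid_of (S ! b) = tid_of (S ! a))"

definition wrote :: "history \<Rightarrow> var \<Rightarrow> nat \<Rightarrow> val \<Rightarrow> bool" where
  "wrote S x m w = (\<exists>t. m + 1 < length S \<and> S ! m = Inv t (Wr x w) \<and> S ! (m + 1) = Res t WOk)"

definition legal :: "history \<Rightarrow> bool" where
  "legal S = (\<forall>k t x v. 0 < k \<longrightarrow> k < length S \<longrightarrow> S ! (k - 1) = Inv t (Rd x) \<longrightarrow>
      S ! k = Res t (RVal v) \<longrightarrow>
      ((\<not> (\<exists>m w. m < k - 1 \<and> wrote S x m w)) \<and> v = 0) \<or>
      (\<exists>m. m < k - 1 \<and> wrote S x m v \<and> (\<forall>m' w'. m < m' \<longrightarrow> m' < k - 1 \<longrightarrow> \<not> wrote S x m' w')))"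

definition vis :: "history \<Rightarrow> tid \<Rightarrow> history" where
  "vis S i = filter (\<lambda>e. tid_of e = i \<or> (committed (tid_of e) S \<and> prec S (tid_of e) i)) S"

definition legal_tx :: "history \<Rightarrow> tid \<Rightarrow> bool" where
  "legal_tx S i = legal (vis S i)"

text \<open>A program is abstracted by the set P of histories it can produce (prefix closed,
  all well-formed). Producible extensions of H are the members of P having H as a prefix.\<close>
definition program :: "history set \<Rightarrow> bool" where
  "program P = ((\<forall>H\<in>P. wf H) \<and> (\<forall>H\<in>P. \<forall>n. take n H \<in> P))"

definition decided :: "history set \<Rightarrow> history \<Rightarrow> tid \<Rightarrow> var \<Rightarrow> bool" where
  "decided P H j x = (\<exists>k k' v r. cop H j k k' (Wr x v) r \<and> r \<noteq> Ab \<and>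
      (\<forall>H'\<in>P. prefix H H' \<longrightarrow> (\<forall>m v'. k' < m \<longrightarrow> m < length H' \<longrightarrow> H' ! m \<noteq> Inv j (Wr x v'))))"

fun keep_inv :: "(var \<Rightarrow> bool) \<Rightarrow> inv \<Rightarrow> bool" where
  "keep_inv d Init = True"
| "keep_inv d (Rd x) = d x"
| "keep_inv d (Wr x v) = d x"
| "keep_inv d TryC = False"
| "keep_inv d TryA = False"

text \<open>Whether position k of the sequential S belongs to S \<Down>_C T_j (init or an operation
  on a variable on which T_j is decided, in H); responses are attributed to the
  immediately preceding invocation.\<close>
definition keepD :: "history set \<Rightarrow> history \<Rightarrow> history \<Rightarrow> nat \<Rightarrow> bool" where
  "keepD P H S k = (case S ! k of
       Inv j i \<Rightarrow> keep_inv (decided P H j) i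
     | Res j _ \<Rightarrow> 0 < k \<and> (case S ! (k - 1) of Inv j' i \<Rightarrow> j' = j \<and> keep_inv (decided P H j) i
                                          | Res _ _ \<Rightarrow> False))"

definition last_of :: "history \<Rightarrow> nat \<Rightarrow> bool" where
  "last_of S k = (\<forall>k'. k < k' \<longrightarrow> k' < length S \<longrightarrow> tid_of (S ! k') \<noteq> tid_of (S ! k))"

text \<open>Candidates T_j whose S \<Down>_C T_j may be included in a last-use view of T_i.\<close>
definition lu_cand :: "history set \<Rightarrow> history \<Rightarrow> history \<Rightarrow> tid \<Rightarrow> tid \<Rightarrow> bool" where
  "lu_cand P H S i j = (j \<noteq> i \<and> \<not> committed j S \<and> (\<exists>x. decided P H j x) \<and>
      prec S j i \<and> \<not> prec H j i)"

text \<open>The last-use view of T_i in S including S \<Down>_C T_j exactly for j in D.\<close>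
definition luview :: "history set \<Rightarrow> history \<Rightarrow> history \<Rightarrow> tid \<Rightarrow> tid set \<Rightarrow> history" where
  "luview P H S i D = concat (map (\<lambda>k. let e = S ! k; t = tid_of e in
       (if t = i \<or> (committed t S \<and> prec S t i) \<or> (t \<in> D \<and> keepD P H S k) then [e] else [])
       @ (if t \<in> D \<and> last_of S k then [Inv t TryC, Res t Com] else []))
     [0..<length S])"

definition lu_legal :: "history set \<Rightarrow> history \<Rightarrow> history \<Rightarrow> tid \<Rightarrow> bool" where
  "lu_legal P H S i = (\<exists>D. D \<subseteq> {j. lu_cand P H S i j} \<and> legal (luview P H S i D))"

definition fs_lu_opaque :: "history set \<Rightarrow> history \<Rightarrow> bool" where
  "fs_lu_opaque P H = (\<exists>Hc S. completion H Hc \<and> sequential S \<and> equiv_hist S Hc \<and>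
      (\<forall>i j. prec H i j \<longrightarrow> prec S i j) \<and>
      (\<forall>i. committed i S \<longrightarrow> legal_tx S i) \<and>
      (\<forall>i. intx i S \<and> \<not> committed i S \<longrightarrow> lu_legal P H S i))"

definition lu_opaque :: "history set \<Rightarrow> history \<Rightarrow> bool" where
  "lu_opaque P H = (\<forall>n \<le> length H. fs_lu_opaque P (take n H))"

definition reads_from_at :: "history \<Rightarrow> tid \<Rightarrow> tid \<Rightarrow> nat \<Rightarrow> nat \<Rightarrow> bool" where
  "reads_from_at H i j k k' = (\<exists>x v a a'. cop H i a a' (Wr x v) WOk \<and> cop H j k k' (Rd x) (RVal v))"

definition ACA :: "history \<Rightarrow> bool" where
  "ACA H = (\<forall>i j k k'. i \<noteq> j \<longrightarrow> reads_from_at H i j k k' \<longrightarrow>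
      (\<exists>c. c < k \<and> H ! c = Res i Com))"

end

theory Submission
  imports Defs
begin

lemma legal_noRVal: "(\<forall>e\<in>set S. \<forall>t v. e \<noteq> Res t (RVal v)) \<Longrightarrow> legal S"
  unfolding legal_def by (metis nth_mem)

lemma view_sub: "e \<in> set (luview P H S i {}) \<Longrightarrow> e \<in> set S \<and> (tid_of e = i \<or> committed (tid_of e) S)"
  unfolding luview_def by (auto simp: Let_def split: if_splits)

lemma seq_app:
  assumes "\<forall>e\<in>set A. tid_of e = a" "\<forall>e\<in>set B. tid_of e = b" "a \<noteq> b"
  shows "sequential (A @ B)"
  unfolding sequential_def
proof (intro allI impI)
  fix x y z assume h: "x < y" "y < z" "z < length (A@B)" "tid_of ((A @ B) ! x) = tid_of ((A @ B) ! z)"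
  have tA: "\<And>k. k < length A \<Longrightarrow> tid_of ((A@B)!k) = a" using assms(1) by (simp add: nth_append)
  have tB: "\<And>k. length A \<le> k \<Longrightarrow> k < length (A@B) \<Longrightarrow> tid_of ((A@B)!k) = b"
    using assms(2) by (simp add: nth_append)
  show "tid_of ((A @ B) ! y) = tid_of ((A @ B) ! x)"
  proof (cases "z < length A")
    case True thus ?thesis using h tA by simp
  next
    case False
    hence "tid_of ((A@B)!z) = b" using tB h by simp
    hence "\<not> x < length A" using tA h assms(3) by force
    thus ?thesis using tB h by simp
  qed
qed

lemma fs_generic:
  assumes comp: "completion Hn Hc"
    and tids: "\<forall>e\<in>set Hc. tid_of e = 1 \<or> tid_of e = 2"
    and nocom: "\<forall>t. Res t Com \<notin> set Hc"
    and noend: "\<forall>t. Res t Com \<notin> set Hn \<and> Res t Ab \<notin> set Hn"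
    and lul: "\<forall>i. intx i (sub Hc 1 @ sub Hc 2) \<and> \<not> committed i (sub Hc 1 @ sub Hc 2) \<longrightarrow> lu_legal P Hn (sub Hc 1 @ sub Hc 2) i"
  shows "fs_lu_opaque P Hn"
  unfolding fs_lu_opaque_def
proof (intro exI conjI)
  let ?S = "sub Hc 1 @ sub Hc 2"
  show "completion Hn Hc" by fact
  show "sequential ?S" by (rule seq_app[where a=1 and b=2]) (auto simp: sub_def)
  show "equiv_hist ?S Hc" unfolding equiv_hist_def sub_def
  proof
    fix t
    show "filter (\<lambda>e. tid_of e = t) (filter (\<lambda>e. tid_of e = 1) Hc @ filter (\<lambda>e. tid_of e = 2) Hc) =
          filter (\<lambda>e. tid_of e = t) Hc"
    proof (cases "t = 1 \<or> t = 2")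
      case True
      then show ?thesis
      proof
        assume t: "t = 1"
        have "filter (\<lambda>e. tid_of e = 1) (filter (\<lambda>e. tid_of e = 2) Hc) = []" by (simp add: filter_empty_conv)
        thus ?thesis using t by simp
      next
        assume t: "t = 2"
        have "filter (\<lambda>e. tid_of e = 2) (filter (\<lambda>e. tid_of e = 1) Hc) = []" by (simp add: filter_empty_conv)
        thus ?thesis using t by simp
      qed
    next
      case False
      hence "filter (\<lambda>e. tid_of e = t) Hc = []" using tids by (auto simp: filter_empty_conv)
      thus ?thesis using False by (auto simp: filter_empty_conv)
    qed
  qed
  show "\<forall>i j. prec Hn i j \<longrightarrow> prec ?S i j" using noend by (auto simp: prec_def committed_def aborted_def)
  show "\<forall>i. committed i ?S \<longrightarrow> legal_tx ?S i" using nocom by (auto simp: committed_def sub_def)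
  show "\<forall>i. intx i ?S \<and> \<not> committed i ?S \<longrightarrow> lu_legal P Hn ?S i" by fact
qed

lemma lul_noRVal:
  assumes "\<forall>e\<in>set Hc. \<forall>t v. e \<noteq> Res t (RVal v)"
  shows "\<forall>i. intx i (sub Hc 1 @ sub Hc 2) \<and> \<not> committed i (sub Hc 1 @ sub Hc 2) \<longrightarrow> lu_legal P Hn (sub Hc 1 @ sub Hc 2) i"
proof (intro allI impI)
  fix i
  show "lu_legal P Hn (sub Hc 1 @ sub Hc 2) i"
    unfolding lu_legal_def
  proof (intro exI conjI)
    show "{} \<subseteq> {j. lu_cand P Hn (sub Hc 1 @ sub Hc 2) i j}" by simp
    show "legal (luview P Hn (sub Hc 1 @ sub Hc 2) i {})"
      apply (rule legal_noRVal)
      using view_sub assms by (fastforce simp: sub_def)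
  qed
qed

definition H0 :: history where
  "H0 = [Inv 1 Init, Res 1 InitOk, Inv 1 (Wr 0 1), Res 1 WOk, Inv 2 Init, Res 2 InitOk, Inv 2 (Rd 0), Res 2 (RVal 1)]"

definition P0 :: "history set" where "P0 = range (\<lambda>n. take n H0)"

lemma comp_test: "completion (take 5 H0) (take 5 H0 @ [Inv 1 TryA, Res 1 Ab, Res 2 Ab])"
  unfolding completion_def
  apply (rule exI[of _ "[Inv 1 TryA, Res 1 Ab, Res 2 Ab]"])
  apply (auto simp: H0_def compl_ext_def live_def intx_def committed_def aborted_def sub_def)
  done

definition S8 :: history where
  "S8 = [Inv 1 Init, Res 1 InitOk, Inv 1 (Wr 0 1), Res 1 WOk, Inv 1 TryA, Res 1 Ab,
         Inv 2 Init, Res 2 InitOk, Inv 2 (Rd 0), Res 2 (RVal 1), Inv 2 TryA, Res 2 Ab]"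

lemma P0_pref: "H' \<in> P0 \<Longrightarrow> prefix H0 H' \<Longrightarrow> H' = H0"
  unfolding P0_def by (auto dest: prefix_length_le)

lemma dec: "decided P0 H0 1 0"
  unfolding decided_def
  apply (rule exI[of _ 2], rule exI[of _ 3], rule exI[of _ 1], rule exI[of _ WOk])
  apply (auto simp: cop_def H0_def dest!: P0_pref)
  apply (auto simp: H0_def less_Suc_eq numeral_eq_Suc)
  done


lemma last_of_drop: "last_of S k \<longleftrightarrow> (\<forall>e\<in>set (drop (Suc k) S). tid_of e \<noteq> tid_of (S!k))"
  unfolding last_of_def
proof safe
  fix e assume h: "\<forall>k'. k < k' \<longrightarrow> k' < length S \<longrightarrow> tid_of (S ! k') \<noteq> tid_of (S ! k)"
    "e \<in> set (drop (Suc k) S)" "tid_of e = tid_of (S ! k)"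
  then obtain j where "j < length (drop (Suc k) S)" "e = drop (Suc k) S ! j" by (auto simp: in_set_conv_nth)
  thus False using h(1)[rule_format, of "Suc k + j"] h(3) by auto
next
  fix k' assume h: "\<forall>e\<in>set (drop (Suc k) S). tid_of e \<noteq> tid_of (S ! k)" "k < k'" "k' < length S"
    "tid_of (S ! k') = tid_of (S ! k)"
  have "S ! k' = drop (Suc k) S ! (k' - Suc k)" using h by simp
  moreover have "k' - Suc k < length (drop (Suc k) S)" using h by simp
  ultimately have "S ! k' \<in> set (drop (Suc k) S)" by (metis nth_mem)
  thus False using h by auto
qed
lemma len8: "length S8 = 12" by (simp add: S8_def)
lemma upt12: "[0..<12] = [0,1,2,3,4,5,6,7,8,9,10,11::nat]" by (simp add: upt_rec)
lemma lastS8: "last_of S8 5" "last_of S8 11"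
  "\<not> last_of S8 0" "\<not> last_of S8 1" "\<not> last_of S8 2" "\<not> last_of S8 3" "\<not> last_of S8 4"
  "\<not> last_of S8 6" "\<not> last_of S8 7" "\<not> last_of S8 8" "\<not> last_of S8 9" "\<not> last_of S8 10"
  by (simp_all add: last_of_drop S8_def)
lemma nc8: "\<not> committed t S8" by (simp add: committed_def S8_def)
lemma view8: "luview P0 H0 S8 2 {1} = 
   [Inv 1 Init, Res 1 InitOk, Inv 1 (Wr 0 1), Res 1 WOk, Inv 1 TryC, Res 1 Com,
         Inv 2 Init, Res 2 InitOk, Inv 2 (Rd 0), Res 2 (RVal 1), Inv 2 TryA, Res 2 Ab]"
  unfolding luview_def len8 upt12
  apply (simp only: list.map concat.simps Let_def nc8 lastS8 simp_thms)
  apply (simp add: S8_def)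
  apply (simp add: keepD_def S8_def dec[unfolded One_nat_def])
  done
lemma lt12: "(k::nat) < 12 \<Longrightarrow> k = 0 \<or> k = 1 \<or> k = 2 \<or> k = 3 \<or> k = 4 \<or> k = 5 \<or> k = 6 \<or> k = 7 \<or> k = 8 \<or> k = 9 \<or> k = 10 \<or> k = 11"
  by arith
lemma lt8: "(k::nat) < 8 \<Longrightarrow> k = 0 \<or> k = 1 \<or> k = 2 \<or> k = 3 \<or> k = 4 \<or> k = 5 \<or> k = 6 \<or> k = 7"
  by arith

lemma legal_view8: "legal [Inv 1 Init, Res 1 InitOk, Inv 1 (Wr 0 1), Res 1 WOk, Inv 1 TryC, Res 1 Com,
         Inv 2 Init, Res 2 InitOk, Inv 2 (Rd 0), Res 2 (RVal 1), Inv 2 TryA, Res 2 Ab]"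
  (is "legal ?V")
  unfolding legal_def
proof (intro allI impI)
  fix k t x v
  assume h: "0 < k" "k < length ?V" "?V ! (k - 1) = Inv t (Rd x)" "?V ! k = Res t (RVal v)"
  have "k < 12" using h(2) by simp
  hence k9: "k = 9" using h by (elim lt12[elim_format] disjE) simp_all
  hence tx: "t = 2" "x = 0" "v = 1" using h by auto
  have "wrote ?V 0 2 1" by (simp add: wrote_def)
  moreover have "\<forall>m' w'. 2 < m' \<longrightarrow> m' < 8 \<longrightarrow> \<not> wrote ?V 0 m' w'"
  proof (intro allI impI)
    fix m' w' assume "2 < m'" "m' < (8::nat)"
    hence "m' = 3 \<or> m' = 4 \<or> m' = 5 \<or> m' = 6 \<or> m' = 7" by arith
    thus "\<not> wrote ?V 0 m' w'" by (elim disjE) (simp_all add: wrote_def)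
  qed
  ultimately show "(\<not> (\<exists>m w. m < k - 1 \<and> wrote ?V x m w) \<and> v = 0) \<or>
      (\<exists>m. m < k - 1 \<and> wrote ?V x m v \<and> (\<forall>m' w'. m < m' \<longrightarrow> m' < k - 1 \<longrightarrow> \<not> wrote ?V x m' w'))"
    using k9 tx by (intro disjI2 exI[of _ 2]) simp
qed

lemma prec8: "prec S8 1 2"
  unfolding prec_def len8
proof (intro conjI allI impI)
  fix a b assume h: "a < 12" "b < 12" "tid_of (S8 ! a) = 1" "tid_of (S8 ! b) = 2"
  from lt12[OF h(1)] lt12[OF h(2)] h(3,4) show "a < b" by (elim disjE) (simp_all add: S8_def)
qed (auto simp: aborted_def intx_def S8_def)

lemma nprecH: "\<not> prec H0 i j"
  by (simp add: prec_def committed_def aborted_def H0_def)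
definition Hc8 :: history where "Hc8 = H0 @ [Inv 1 TryA, Res 1 Ab, Inv 2 TryA, Res 2 Ab]"
lemma S8_eq: "sub Hc8 1 @ sub Hc8 2 = S8" by (simp add: Hc8_def H0_def S8_def sub_def)

lemma fs8: "fs_lu_opaque P0 H0"
proof (rule fs_generic[where Hc = Hc8])
  show "completion H0 Hc8" unfolding completion_def Hc8_def
    apply (rule exI[of _ "[Inv 1 TryA, Res 1 Ab, Inv 2 TryA, Res 2 Ab]"])
    by (auto simp: H0_def compl_ext_def live_def intx_def committed_def aborted_def sub_def)
  show "\<forall>e\<in>set Hc8. tid_of e = 1 \<or> tid_of e = 2" by (auto simp: Hc8_def H0_def)
  show "\<forall>t. Res t Com \<notin> set Hc8" by (auto simp: Hc8_def H0_def)
  show "\<forall>t. Res t Com \<notin> set H0 \<and> Res t Ab \<notin> set H0" by (auto simp: H0_def)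
  show "\<forall>i. intx i (sub Hc8 1 @ sub Hc8 2) \<and> \<not> committed i (sub Hc8 1 @ sub Hc8 2) \<longrightarrow>
    lu_legal P0 H0 (sub Hc8 1 @ sub Hc8 2) i"
    unfolding S8_eq
  proof (intro allI impI)
    fix i assume "intx i S8 \<and> \<not> committed i S8"
    hence i12: "i = 1 \<or> i = 2" by (auto simp: intx_def S8_def)
    thus "lu_legal P0 H0 S8 i"
    proof
      assume i: "i = 1"
      show ?thesis unfolding lu_legal_def
      proof (intro exI conjI)
        show "{} \<subseteq> {j. lu_cand P0 H0 S8 i j}" by simp
        show "legal (luview P0 H0 S8 i {})"
        proof (rule legal_noRVal, intro ballI allI)
          fix e t v assume e: "e \<in> set (luview P0 H0 S8 i {})"
          from view_sub[OF e] nc8 have "e \<in> set S8" "tid_of e = 1" using i by auto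
          thus "e \<noteq> Res t (RVal v)" by (auto simp: S8_def)
        qed
      qed
    next
      assume i: "i = 2"
      show ?thesis unfolding lu_legal_def i
      proof (intro exI conjI)
        show "{1} \<subseteq> {j. lu_cand P0 H0 S8 2 j}"
          using dec prec8 nprecH nc8 by (auto simp: lu_cand_def)
        show "legal (luview P0 H0 S8 2 {1})" unfolding view8 by (rule legal_view8)
      qed
    qed
  qed
qed

lemma fs_small: "n < 8 \<Longrightarrow> fs_lu_opaque P0 (take n H0)"
proof -
  assume "n < 8"
  hence "n = 0 \<or> n = 1 \<or> n = 2 \<or> n = 3 \<or> n = 4 \<or> n = 5 \<or> n = 6 \<or> n = 7" by arith
  thus ?thesis
  proof (elim disjE)
    assume n: "n = 0"
    show ?thesis unfolding n
      apply (rule fs_generic[where Hc = "take 0 H0 @ []"])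
      apply (unfold completion_def, rule exI[of _ "[]"])
      apply (rule_tac [5] lul_noRVal)
      apply (auto simp: H0_def compl_ext_def live_def intx_def committed_def aborted_def sub_def)
      done
  next
    assume n: "n = 1"
    show ?thesis unfolding n
      apply (rule fs_generic[where Hc = "take 1 H0 @ [Res 1 Ab]"])
      apply (unfold completion_def, rule exI[of _ "[Res 1 Ab]"])
      apply (rule_tac [5] lul_noRVal)
      apply (auto simp: H0_def compl_ext_def live_def intx_def committed_def aborted_def sub_def)
      done
  next
    assume n: "n = 2"
    show ?thesis unfolding n
      apply (rule fs_generic[where Hc = "take 2 H0 @ [Inv 1 TryA, Res 1 Ab]"])
      apply (unfold completion_def, rule exI[of _ "[Inv 1 TryA, Res 1 Ab]"])
      apply (rule_tac [5] lul_noRVal)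
      apply (auto simp: H0_def compl_ext_def live_def intx_def committed_def aborted_def sub_def)
      done
  next
    assume n: "n = 3"
    show ?thesis unfolding n
      apply (rule fs_generic[where Hc = "take 3 H0 @ [Res 1 Ab]"])
      apply (unfold completion_def, rule exI[of _ "[Res 1 Ab]"])
      apply (rule_tac [5] lul_noRVal)
      apply (auto simp: H0_def compl_ext_def live_def intx_def committed_def aborted_def sub_def)
      done
  next
    assume n: "n = 4"
    show ?thesis unfolding n
      apply (rule fs_generic[where Hc = "take 4 H0 @ [Inv 1 TryA, Res 1 Ab]"])
      apply (unfold completion_def, rule exI[of _ "[Inv 1 TryA, Res 1 Ab]"])
      apply (rule_tac [5] lul_noRVal)
      apply (auto simp: H0_def compl_ext_def live_def intx_def committed_def aborted_def sub_def)
      done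
  next
    assume n: "n = 5"
    show ?thesis unfolding n
      apply (rule fs_generic[where Hc = "take 5 H0 @ [Inv 1 TryA, Res 1 Ab, Res 2 Ab]"])
      apply (unfold completion_def, rule exI[of _ "[Inv 1 TryA, Res 1 Ab, Res 2 Ab]"])
      apply (rule_tac [5] lul_noRVal)
      apply (auto simp: H0_def compl_ext_def live_def intx_def committed_def aborted_def sub_def)
      done
  next
    assume n: "n = 6"
    show ?thesis unfolding n
      apply (rule fs_generic[where Hc = "take 6 H0 @ [Inv 1 TryA, Res 1 Ab, Inv 2 TryA, Res 2 Ab]"])
      apply (unfold completion_def, rule exI[of _ "[Inv 1 TryA, Res 1 Ab, Inv 2 TryA, Res 2 Ab]"])
      apply (rule_tac [5] lul_noRVal)
      apply (auto simp: H0_def compl_ext_def live_def intx_def committed_def aborted_def sub_def)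
      done
  next
    assume n: "n = 7"
    show ?thesis unfolding n
      apply (rule fs_generic[where Hc = "take 7 H0 @ [Inv 1 TryA, Res 1 Ab, Res 2 Ab]"])
      apply (unfold completion_def, rule exI[of _ "[Inv 1 TryA, Res 1 Ab, Res 2 Ab]"])
      apply (rule_tac [5] lul_noRVal)
      apply (auto simp: H0_def compl_ext_def live_def intx_def committed_def aborted_def sub_def)
      done
  qed
qed
lemma wf_seq_prefix: "wf_seq b xs \<Longrightarrow> prefix ys xs \<Longrightarrow> wf_seq b ys"
proof (induction b xs arbitrary: ys rule: wf_seq.induct)
  case (1 b) thus ?case by simp
next
  case (2 b t i) thus ?case by (cases ys) auto
next
  case (3 b t i t' r rest)
  show ?case
  proof (cases ys)
    case Nil thus ?thesis by simp
  next
    case (Cons y ys1)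
    show ?thesis
    proof (cases ys1)
      case Nil thus ?thesis using 3 Cons by auto
    next
      case (Cons y2 ys2)
      have p: "y = Inv t i" "y2 = Res t' r" "prefix ys2 rest" using 3(3) \<open>ys = y # ys1\<close> Cons by auto
      show ?thesis
      proof (cases "terminal r")
        case True thus ?thesis using 3(2) p \<open>ys = y # ys1\<close> Cons by (auto simp del: terminal.simps)
      next
        case False thus ?thesis using 3 p \<open>ys = y # ys1\<close> Cons by (auto simp del: terminal.simps)
      qed
    qed
  qed
qed simp_all

lemma prefix_filter_mono: "prefix xs ys \<Longrightarrow> prefix (filter P xs) (filter P ys)"
  by (auto simp: prefix_def)

lemma wf_take: "wf H \<Longrightarrow> wf (take n H)"
  unfolding wf_def
proof (intro conjI allI)
  fix t assume "(\<forall>t. wf_seq False (sub H t)) \<and> unique_writes H"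
  thus "wf_seq False (sub (take n H) t)"
    using wf_seq_prefix prefix_filter_mono[OF take_is_prefix] unfolding sub_def by blast
next
  assume "(\<forall>t. wf_seq False (sub H t)) \<and> unique_writes H"
  thus "unique_writes (take n H)" unfolding unique_writes_def by auto
qed

lemma lt8': "(k::nat) < 8 \<Longrightarrow> k = 0 \<or> k = 1 \<or> k = 2 \<or> k = 3 \<or> k = 4 \<or> k = 5 \<or> k = 6 \<or> k = 7"
  by arith

lemma wfH0: "wf H0"
  unfolding wf_def
proof (intro conjI allI)
  fix t
  show "wf_seq False (sub H0 t)"
    by (cases "t = 1"; cases "t = 2") (auto simp: sub_def H0_def)
next
  show "unique_writes H0" unfolding unique_writes_def
  proof (intro allI impI)
    fix k k' t t' x v assume h: "k < k'" "k' < length H0" "H0 ! k = Inv t (Wr x v)"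
    have "k' < 8" using h(2) by (simp add: H0_def)
    hence "k < 8" using h(1) by simp
    have "k = 2" using lt8'[OF \<open>k < 8\<close>] h(3) by (elim disjE) (simp_all add: H0_def)
    show "H0 ! k' \<noteq> Inv t' (Wr x v)"
      using lt8'[OF \<open>k' < 8\<close>] h(1) \<open>k = 2\<close> by (elim disjE) (simp_all add: H0_def)
  qed
qed

lemma progP0: "program P0"
  unfolding program_def P0_def using wf_take[OF wfH0] by auto

lemma cop1: "cop H0 1 2 3 (Wr 0 1) WOk"
  unfolding cop_def by (simp add: H0_def)
lemma cop2: "cop H0 2 6 7 (Rd 0) (RVal 1)"
  unfolding cop_def by (simp add: H0_def)

lemma notACA: "\<not> ACA H0"
proof
  assume A: "ACA H0"
  have r: "reads_from_at H0 1 2 6 7"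
    unfolding reads_from_at_def using cop1 cop2 by blast
  have "(1::nat) \<noteq> 2" by simp
  from A[unfolded ACA_def, rule_format, OF this r] obtain c where c: "c < 6" "H0 ! c = Res 1 Com" by blast
  moreover have "c < length H0" using c(1) by (simp add: H0_def)
  ultimately have "Res 1 Com \<in> set H0" by (metis nth_mem)
  thus False by (simp add: H0_def)
qed

lemma luo: "lu_opaque P0 H0"
  unfolding lu_opaque_def
proof (intro allI impI)
  fix n assume "n \<le> length H0"
  hence "n < 8 \<or> n = 8" by (auto simp: H0_def)
  thus "fs_lu_opaque P0 (take n H0)"
  proof
    assume "n = 8"
    moreover have "take 8 H0 = H0" by (simp add: H0_def)
    ultimately show ?thesis using fs8 by simp
  qed (rule fs_small)
qed

theorem mainTheorem16:
  shows "\<exists>P H. program P \<and> H \<in> P \<and> wf H \<and> lu_opaque P H \<and> \<not> ACA H"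
proof (intro exI conjI)
  show "program P0" by (rule progP0)
  show "H0 \<in> P0" unfolding P0_def by (rule range_eqI[of _ _ 8]) (simp add: H0_def)
  show "wf H0" by (rule wfH0)
  show "lu_opaque P0 H0" by (rule luo)
  show "\<not> ACA H0" by (rule notACA)
qed
end
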